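(* Let $\mathcal{C}$ be a deflation-exact category and $\mathcal{A}$ an admissibly deflation-percolating subcategory. Let $f\colon X\to Y$ be an admissible morphism whose kernel and cokernel lie in $\mathcal{A}$, and let $g\colon X\to A$ be any morphism with $A\in\mathcal{A}$. Then the pushout of $f$ along $g$ exists, and the induced morphism $A\to P$ (where $P$ is the pushout) is admissible with kernel and cokernel in $\mathcal{A}$.
   Context: A conflation category is an additive category with a class of kernel-cokernel pairs (closed under isomorphisms) called conflations; first map an inflation, second a deflation. A deflation-exact category is a conflation category satisfying: (R0) $1_0$ is a deflation; (R1) composites of deflations are deflations; (R2) pullbacks of deflations along arbitrary morphisms exist and are deflations. A morphism is admissible if it factors as a deflation followed by an inflation. A non-empty full subcategory $\mathcal{A}$ is admissibly deflation-percolating if: (A1) for every conflation $A'\rightarrowtail A\twoheadrightarrow A''$, $A\in\mathcal{A}$ iff $A',A''\in\mathcal{A}$; (A2) every morphism $C\to A$ with $A\in\mathcal{A}$ factors as a deflation $C\twoheadrightarrow A'$ followed by an inflation $A'\rightarrowtail A$ with $A'\in\mathcal{A}$; (A3) if $a\colon C\rightarrowtail D$ is an inflation and $b\colon C\twoheadrightarrow A$ a deflation with $A\in\mathcal{A}$, the pushout of $a$ along $b$ exists and yields a deflation $D\twoheadrightarrow P$ and an inflation $A\rightarrowtail P$. *)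

theory Defs
  imports Main
begin

record ('o, 'm) cat =
  ob  :: "'o set"
  ar  :: "'m set"
  dm  :: "'m \<Rightarrow> 'o"
  cd  :: "'m \<Rightarrow> 'o"
  cp  :: "'m \<Rightarrow> 'm \<Rightarrow> 'm"    \<comment> \<open>cp g f = g \<circ> f\<close>
  idt :: "'o \<Rightarrow> 'm"
  zr  :: "'o \<Rightarrow> 'o \<Rightarrow> 'm"
  ad  :: "'m \<Rightarrow> 'm \<Rightarrow> 'm"
  ng  :: "'m \<Rightarrow> 'm"

definition hom :: "('o, 'm, 'x) cat_scheme \<Rightarrow> 'o \<Rightarrow> 'o \<Rightarrow> 'm set" where
  "hom C X Y = {f \<in> ar C. dm C f = X \<and> cd C f = Y}"

definition is_category :: "('o, 'm, 'x) cat_scheme \<Rightarrow> bool" where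
  "is_category C \<longleftrightarrow>
     (\<forall>f \<in> ar C. dm C f \<in> ob C \<and> cd C f \<in> ob C) \<and>
     (\<forall>X \<in> ob C. idt C X \<in> hom C X X) \<and>
     (\<forall>X \<in> ob C. \<forall>Y \<in> ob C. \<forall>Z \<in> ob C. \<forall>f \<in> hom C X Y. \<forall>g \<in> hom C Y Z.
         cp C g f \<in> hom C X Z) \<and>
     (\<forall>f \<in> ar C. cp C (idt C (cd C f)) f = f \<and> cp C f (idt C (dm C f)) = f) \<and>
     (\<forall>f \<in> ar C. \<forall>g \<in> ar C. \<forall>h \<in> ar C. cd C f = dm C g \<and> cd C g = dm C h \<longrightarrow>
         cp C h (cp C g f) = cp C (cp C h g) f)"

definition is_preadditive :: "('o, 'm, 'x) cat_scheme \<Rightarrow> bool" where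
  "is_preadditive C \<longleftrightarrow> is_category C \<and>
     (\<forall>X \<in> ob C. \<forall>Y \<in> ob C.
        zr C X Y \<in> hom C X Y \<and>
        (\<forall>f \<in> hom C X Y. \<forall>g \<in> hom C X Y. ad C f g \<in> hom C X Y) \<and>
        (\<forall>f \<in> hom C X Y. ng C f \<in> hom C X Y) \<and>
        (\<forall>f \<in> hom C X Y. \<forall>g \<in> hom C X Y. \<forall>h \<in> hom C X Y.
            ad C (ad C f g) h = ad C f (ad C g h)) \<and>
        (\<forall>f \<in> hom C X Y. \<forall>g \<in> hom C X Y. ad C f g = ad C g f) \<and>
        (\<forall>f \<in> hom C X Y. ad C f (zr C X Y) = f) \<and>
        (\<forall>f \<in> hom C X Y. ad C f (ng C f) = zr C X Y)) \<and>
     (\<forall>X \<in> ob C. \<forall>Y \<in> ob C. \<forall>Z \<in> ob C. \<forall>f \<in> hom C X Y. \<forall>g \<in> hom C X Y. \<forall>h \<in> hom C Y Z.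
        cp C h (ad C f g) = ad C (cp C h f) (cp C h g)) \<and>
     (\<forall>X \<in> ob C. \<forall>Y \<in> ob C. \<forall>Z \<in> ob C. \<forall>h \<in> hom C X Y. \<forall>f \<in> hom C Y Z. \<forall>g \<in> hom C Y Z.
        cp C (ad C f g) h = ad C (cp C f h) (cp C g h))"

definition is_zero_object :: "('o, 'm, 'x) cat_scheme \<Rightarrow> 'o \<Rightarrow> bool" where
  "is_zero_object C Z \<longleftrightarrow> Z \<in> ob C \<and>
     (\<forall>X \<in> ob C. (\<exists>!f. f \<in> hom C Z X) \<and> (\<exists>!f. f \<in> hom C X Z))"

definition has_biproducts :: "('o, 'm, 'x) cat_scheme \<Rightarrow> bool" where
  "has_biproducts C \<longleftrightarrow>
     (\<forall>X1 \<in> ob C. \<forall>X2 \<in> ob C. \<exists>S \<in> ob C. \<exists>i1 \<in> hom C X1 S. \<exists>i2 \<in> hom C X2 S.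
        \<exists>p1 \<in> hom C S X1. \<exists>p2 \<in> hom C S X2.
          cp C p1 i1 = idt C X1 \<and> cp C p2 i2 = idt C X2 \<and>
          cp C p1 i2 = zr C X2 X1 \<and> cp C p2 i1 = zr C X1 X2 \<and>
          ad C (cp C i1 p1) (cp C i2 p2) = idt C S)"

definition is_additive :: "('o, 'm, 'x) cat_scheme \<Rightarrow> bool" where
  "is_additive C \<longleftrightarrow> is_preadditive C \<and> (\<exists>Z. is_zero_object C Z) \<and> has_biproducts C"

definition is_iso :: "('o, 'm, 'x) cat_scheme \<Rightarrow> 'm \<Rightarrow> bool" where
  "is_iso C f \<longleftrightarrow> f \<in> ar C \<and>
     (\<exists>g \<in> hom C (cd C f) (dm C f). cp C g f = idt C (dm C f) \<and> cp C f g = idt C (cd C f))"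

definition is_kernel :: "('o, 'm, 'x) cat_scheme \<Rightarrow> 'm \<Rightarrow> 'm \<Rightarrow> bool" where
  "is_kernel C k f \<longleftrightarrow> k \<in> ar C \<and> f \<in> ar C \<and> cd C k = dm C f \<and>
     cp C f k = zr C (dm C k) (cd C f) \<and>
     (\<forall>t \<in> ar C. cd C t = dm C f \<and> cp C f t = zr C (dm C t) (cd C f) \<longrightarrow>
        (\<exists>!u. u \<in> hom C (dm C t) (dm C k) \<and> cp C k u = t))"

definition is_cokernel :: "('o, 'm, 'x) cat_scheme \<Rightarrow> 'm \<Rightarrow> 'm \<Rightarrow> bool" where
  "is_cokernel C c f \<longleftrightarrow> c \<in> ar C \<and> f \<in> ar C \<and> dm C c = cd C f \<and>
     cp C c f = zr C (dm C f) (cd C c) \<and>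
     (\<forall>t \<in> ar C. dm C t = cd C f \<and> cp C t f = zr C (dm C f) (cd C t) \<longrightarrow>
        (\<exists>!u. u \<in> hom C (cd C c) (cd C t) \<and> cp C u c = t))"

definition is_kernel_cokernel_pair :: "('o, 'm, 'x) cat_scheme \<Rightarrow> 'm \<Rightarrow> 'm \<Rightarrow> bool" where
  "is_kernel_cokernel_pair C i p \<longleftrightarrow> is_kernel C i p \<and> is_cokernel C p i"

definition conflation_category :: "('o, 'm, 'x) cat_scheme \<Rightarrow> ('m \<times> 'm) set \<Rightarrow> bool" where
  "conflation_category C E \<longleftrightarrow> is_additive C \<and>
     (\<forall>(i, p) \<in> E. is_kernel_cokernel_pair C i p) \<and>
     (\<forall>(i, p) \<in> E. \<forall>i' \<in> ar C. \<forall>p' \<in> ar C. \<forall>a b c.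
        cd C i' = dm C p' \<and>
        is_iso C a \<and> dm C a = dm C i \<and> cd C a = dm C i' \<and>
        is_iso C b \<and> dm C b = cd C i \<and> cd C b = cd C i' \<and>
        is_iso C c \<and> dm C c = cd C p \<and> cd C c = cd C p' \<and>
        cp C i' a = cp C b i \<and> cp C p' b = cp C c p \<longrightarrow> (i', p') \<in> E)"

definition inflation :: "('m \<times> 'm) set \<Rightarrow> 'm \<Rightarrow> bool" where
  "inflation E i \<longleftrightarrow> (\<exists>p. (i, p) \<in> E)"

definition deflation :: "('m \<times> 'm) set \<Rightarrow> 'm \<Rightarrow> bool" where
  "deflation E p \<longleftrightarrow> (\<exists>i. (i, p) \<in> E)"

definition is_pullback :: "('o, 'm, 'x) cat_scheme \<Rightarrow> 'm \<Rightarrow> 'm \<Rightarrow> 'o \<Rightarrow> 'm \<Rightarrow> 'm \<Rightarrow> bool" where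
  "is_pullback C p f P p' f' \<longleftrightarrow> p \<in> ar C \<and> f \<in> ar C \<and> cd C p = cd C f \<and> P \<in> ob C \<and>
     p' \<in> hom C P (dm C f) \<and> f' \<in> hom C P (dm C p) \<and> cp C p f' = cp C f p' \<and>
     (\<forall>Z \<in> ob C. \<forall>u \<in> hom C Z (dm C f). \<forall>v \<in> hom C Z (dm C p).
        cp C p v = cp C f u \<longrightarrow> (\<exists>!w. w \<in> hom C Z P \<and> cp C p' w = u \<and> cp C f' w = v))"

text \<open>Pushout of f along g (same domain): object P with f' : cod g \<rightarrow> P,
  g' : cod f \<rightarrow> P, f' \<circ> g = g' \<circ> f, universal. f' is the induced morphism.\<close>
definition is_pushout :: "('o, 'm, 'x) cat_scheme \<Rightarrow> 'm \<Rightarrow> 'm \<Rightarrow> 'o \<Rightarrow> 'm \<Rightarrow> 'm \<Rightarrow> bool" where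
  "is_pushout C f g P f' g' \<longleftrightarrow> f \<in> ar C \<and> g \<in> ar C \<and> dm C f = dm C g \<and> P \<in> ob C \<and>
     f' \<in> hom C (cd C g) P \<and> g' \<in> hom C (cd C f) P \<and> cp C f' g = cp C g' f \<and>
     (\<forall>Z \<in> ob C. \<forall>u \<in> hom C (cd C g) Z. \<forall>v \<in> hom C (cd C f) Z.
        cp C u g = cp C v f \<longrightarrow> (\<exists>!w. w \<in> hom C P Z \<and> cp C w f' = u \<and> cp C w g' = v))"

definition deflation_exact :: "('o, 'm, 'x) cat_scheme \<Rightarrow> ('m \<times> 'm) set \<Rightarrow> bool" where
  "deflation_exact C E \<longleftrightarrow> conflation_category C E \<and>
     \<comment> \<open>R0\<close>
     (\<exists>Z. is_zero_object C Z \<and> deflation E (idt C Z)) \<and>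
     \<comment> \<open>R1\<close>
     (\<forall>p q. deflation E p \<and> deflation E q \<and> cd C p = dm C q \<longrightarrow> deflation E (cp C q p)) \<and>
     \<comment> \<open>R2\<close>
     (\<forall>p f. deflation E p \<and> f \<in> ar C \<and> cd C f = cd C p \<longrightarrow>
        (\<exists>P p' f'. is_pullback C p f P p' f' \<and> deflation E p'))"

definition admissible :: "('o, 'm, 'x) cat_scheme \<Rightarrow> ('m \<times> 'm) set \<Rightarrow> 'm \<Rightarrow> bool" where
  "admissible C E f \<longleftrightarrow> (\<exists>p i. deflation E p \<and> inflation E i \<and> cd C p = dm C i \<and> f = cp C i p)"

definition kernel_in :: "('o, 'm, 'x) cat_scheme \<Rightarrow> 'o set \<Rightarrow> 'm \<Rightarrow> bool" where
  "kernel_in C A f \<longleftrightarrow> (\<exists>k. is_kernel C k f \<and> dm C k \<in> A)"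

definition cokernel_in :: "('o, 'm, 'x) cat_scheme \<Rightarrow> 'o set \<Rightarrow> 'm \<Rightarrow> bool" where
  "cokernel_in C A f \<longleftrightarrow> (\<exists>c. is_cokernel C c f \<and> cd C c \<in> A)"

text \<open>Admissibly deflation-percolating subcategory, given by its (non-empty) set of objects
  (full subcategory).\<close>
definition adm_defl_percolating :: "('o, 'm, 'x) cat_scheme \<Rightarrow> ('m \<times> 'm) set \<Rightarrow> 'o set \<Rightarrow> bool" where
  "adm_defl_percolating C E A \<longleftrightarrow> A \<subseteq> ob C \<and> A \<noteq> {} \<and>
     \<comment> \<open>A1\<close>
     (\<forall>(i, p) \<in> E. cd C i \<in> A \<longleftrightarrow> dm C i \<in> A \<and> cd C p \<in> A) \<and>
     \<comment> \<open>A2\<close>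
     (\<forall>c \<in> ar C. cd C c \<in> A \<longrightarrow>
        (\<exists>p i. deflation E p \<and> inflation E i \<and> cd C p = dm C i \<and> dm C i \<in> A \<and> c = cp C i p)) \<and>
     \<comment> \<open>A3\<close>
     (\<forall>a b. inflation E a \<and> deflation E b \<and> dm C a = dm C b \<and> cd C b \<in> A \<longrightarrow>
        (\<exists>P b' a'. is_pushout C a b P b' a' \<and> deflation E a' \<and> inflation E b'))"

end

theory Submission
  imports Defs
begin


locale dex =
  fixes C :: "('o, 'm, 'x) cat_scheme" and E :: "('m \<times> 'm) set" and Ac :: "'o set"
  assumes de: "deflation_exact C E" and perc: "adm_defl_percolating C E Ac"
begin

abbreviation cmp (infixr "\<cdot>" 55) where "g \<cdot> f \<equiv> cp C g f"

lemma confl: "conflation_category C E" using de by (simp add: deflation_exact_def)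
lemma addit: "is_additive C" using confl by (simp add: conflation_category_def)
lemma preadd: "is_preadditive C" using addit by (simp add: is_additive_def)
lemma cat: "is_category C" using preadd by (simp add: is_preadditive_def)

lemma hom_iff: "f \<in> hom C X Y \<longleftrightarrow> f \<in> ar C \<and> dm C f = X \<and> cd C f = Y"
  by (simp add: hom_def)

lemma ar_hom: "f \<in> ar C \<Longrightarrow> f \<in> hom C (dm C f) (cd C f)"
  by (simp add: hom_def)

lemma dm_ob: "f \<in> ar C \<Longrightarrow> dm C f \<in> ob C" using cat by (simp add: is_category_def)
lemma cd_ob: "f \<in> ar C \<Longrightarrow> cd C f \<in> ob C" using cat by (simp add: is_category_def)

lemma hom_ar: "f \<in> hom C X Y \<Longrightarrow> f \<in> ar C" by (simp add: hom_def)
lemma hom_dm: "f \<in> hom C X Y \<Longrightarrow> dm C f = X" by (simp add: hom_def)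
lemma hom_cd: "f \<in> hom C X Y \<Longrightarrow> cd C f = Y" by (simp add: hom_def)
lemma hom_obs: "f \<in> hom C X Y \<Longrightarrow> X \<in> ob C \<and> Y \<in> ob C"
  using dm_ob cd_ob by (auto simp: hom_def)

lemma comp_hom[intro]: "f \<in> hom C X Y \<Longrightarrow> g \<in> hom C Y Z \<Longrightarrow> g \<cdot> f \<in> hom C X Z"
  using cat hom_obs unfolding is_category_def by blast

lemma assoc: "f \<in> hom C X Y \<Longrightarrow> g \<in> hom C Y Z \<Longrightarrow> h \<in> hom C Z W \<Longrightarrow>
   h \<cdot> (g \<cdot> f) = (h \<cdot> g) \<cdot> f"
  using cat unfolding is_category_def hom_def by auto

lemma id_hom[intro]: "X \<in> ob C \<Longrightarrow> idt C X \<in> hom C X X"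
  using cat unfolding is_category_def by auto

lemma id_l: "f \<in> hom C X Y \<Longrightarrow> idt C Y \<cdot> f = f"
  using cat unfolding is_category_def hom_def by auto
lemma id_r: "f \<in> hom C X Y \<Longrightarrow> f \<cdot> idt C X = f"
  using cat unfolding is_category_def hom_def by auto

lemma pa: "X \<in> ob C \<Longrightarrow> Y \<in> ob C \<Longrightarrow>
        zr C X Y \<in> hom C X Y \<and>
        (\<forall>f \<in> hom C X Y. \<forall>g \<in> hom C X Y. ad C f g \<in> hom C X Y) \<and>
        (\<forall>f \<in> hom C X Y. ng C f \<in> hom C X Y) \<and>
        (\<forall>f \<in> hom C X Y. \<forall>g \<in> hom C X Y. \<forall>h \<in> hom C X Y.
            ad C (ad C f g) h = ad C f (ad C g h)) \<and>
        (\<forall>f \<in> hom C X Y. \<forall>g \<in> hom C X Y. ad C f g = ad C g f) \<and>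
        (\<forall>f \<in> hom C X Y. ad C f (zr C X Y) = f) \<and>
        (\<forall>f \<in> hom C X Y. ad C f (ng C f) = zr C X Y)"
  by (rule bspec[OF bspec[OF conjunct1[OF conjunct2[OF preadd[unfolded is_preadditive_def]]]]])

lemma pa2: "X \<in> ob C \<Longrightarrow> Y \<in> ob C \<Longrightarrow> Z \<in> ob C \<Longrightarrow>
     (\<forall>f \<in> hom C X Y. \<forall>g \<in> hom C X Y. \<forall>h \<in> hom C Y Z.
        cp C h (ad C f g) = ad C (cp C h f) (cp C h g))"
  by (rule bspec[OF bspec[OF bspec[OF conjunct1[OF conjunct2[OF conjunct2[OF preadd[unfolded is_preadditive_def]]]]]]])

lemma pa3: "X \<in> ob C \<Longrightarrow> Y \<in> ob C \<Longrightarrow> Z \<in> ob C \<Longrightarrow>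
     (\<forall>h \<in> hom C X Y. \<forall>f \<in> hom C Y Z. \<forall>g \<in> hom C Y Z.
        cp C (ad C f g) h = ad C (cp C f h) (cp C g h))"
  by (rule bspec[OF bspec[OF bspec[OF conjunct2[OF conjunct2[OF conjunct2[OF preadd[unfolded is_preadditive_def]]]]]]])

lemma zr_hom[intro]: "X \<in> ob C \<Longrightarrow> Y \<in> ob C \<Longrightarrow> zr C X Y \<in> hom C X Y"
  using pa by blast
lemma ad_hom[intro]: "f \<in> hom C X Y \<Longrightarrow> g \<in> hom C X Y \<Longrightarrow> ad C f g \<in> hom C X Y"
  using pa[of X Y] hom_obs[of f X Y] by blast
lemma ng_hom[intro]: "f \<in> hom C X Y \<Longrightarrow> ng C f \<in> hom C X Y"
  using pa[of X Y] hom_obs[of f X Y] by blast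
lemma ad_assoc: "f \<in> hom C X Y \<Longrightarrow> g \<in> hom C X Y \<Longrightarrow> h \<in> hom C X Y \<Longrightarrow>
   ad C (ad C f g) h = ad C f (ad C g h)"
  using pa[of X Y] hom_obs[of f X Y] by blast
lemma ad_comm: "f \<in> hom C X Y \<Longrightarrow> g \<in> hom C X Y \<Longrightarrow> ad C f g = ad C g f"
  using pa[of X Y] hom_obs[of f X Y] by blast
lemma ad_zr: "f \<in> hom C X Y \<Longrightarrow> ad C f (zr C X Y) = f"
  using pa[of X Y] hom_obs[of f X Y] by blast
lemma ad_ng: "f \<in> hom C X Y \<Longrightarrow> ad C f (ng C f) = zr C X Y"
  using pa[of X Y] hom_obs[of f X Y] by blast
lemma distl: "f \<in> hom C X Y \<Longrightarrow> g \<in> hom C X Y \<Longrightarrow> h \<in> hom C Y Z \<Longrightarrow>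
   h \<cdot> ad C f g = ad C (h \<cdot> f) (h \<cdot> g)"
  using pa2[of X Y Z] hom_obs[of f X Y] hom_obs[of h Y Z] by blast
lemma distr: "h \<in> hom C X Y \<Longrightarrow> f \<in> hom C Y Z \<Longrightarrow> g \<in> hom C Y Z \<Longrightarrow>
   ad C f g \<cdot> h = ad C (f \<cdot> h) (g \<cdot> h)"
  using pa3[of X Y Z] hom_obs[of h X Y] hom_obs[of f Y Z] by blast

lemma zr_l_ad: "f \<in> hom C X Y \<Longrightarrow> ad C (zr C X Y) f = f"
  using ad_comm ad_zr hom_obs zr_hom by metis

lemma cancel: assumes "a \<in> hom C X Y" "b \<in> hom C X Y" "c \<in> hom C X Y" "ad C a c = ad C b c"
  shows "a = b"
proof -
  have n: "ng C c \<in> hom C X Y" using assms by auto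
  have "a = ad C a (ad C c (ng C c))" using ad_ng[OF assms(3)] ad_zr[OF assms(1)] by simp
  also have "\<dots> = ad C (ad C a c) (ng C c)" using ad_assoc[OF assms(1) assms(3) n] by simp
  also have "\<dots> = ad C (ad C b c) (ng C c)" using assms by simp
  also have "\<dots> = ad C b (ad C c (ng C c))" using ad_assoc[OF assms(2) assms(3) n] by simp
  also have "\<dots> = b" using ad_ng[OF assms(3)] ad_zr[OF assms(2)] by simp
  finally show ?thesis .
qed

lemma zero_r: assumes "h \<in> hom C Y Z" "X \<in> ob C" shows "h \<cdot> zr C X Y = zr C X Z"
proof -
  have Y: "Y \<in> ob C" "Z \<in> ob C" using assms hom_obs by auto
  have z: "zr C X Y \<in> hom C X Y" using Y assms by auto
  have x: "h \<cdot> zr C X Y \<in> hom C X Z" using z assms by auto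
  have "h \<cdot> zr C X Y = h \<cdot> ad C (zr C X Y) (zr C X Y)" using ad_zr z by simp
  also have "\<dots> = ad C (h \<cdot> zr C X Y) (h \<cdot> zr C X Y)" using distl z assms by blast
  finally have "ad C (h \<cdot> zr C X Y) (h \<cdot> zr C X Y) = ad C (zr C X Z) (h \<cdot> zr C X Y)"
    using zr_l_ad x by metis
  then show ?thesis using cancel x Y assms by blast
qed

lemma zero_l: assumes "h \<in> hom C X Y" "Z \<in> ob C" shows "zr C Y Z \<cdot> h = zr C X Z"
proof -
  have Y: "Y \<in> ob C" "X \<in> ob C" using assms hom_obs by auto
  have z: "zr C Y Z \<in> hom C Y Z" using Y assms by auto
  have x: "zr C Y Z \<cdot> h \<in> hom C X Z" using z assms by auto
  have "zr C Y Z \<cdot> h = ad C (zr C Y Z) (zr C Y Z) \<cdot> h" using ad_zr z by simp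
  also have "\<dots> = ad C (zr C Y Z \<cdot> h) (zr C Y Z \<cdot> h)" using distr z assms by blast
  finally have "ad C (zr C Y Z \<cdot> h) (zr C Y Z \<cdot> h) = ad C (zr C X Z) (zr C Y Z \<cdot> h)"
    using zr_l_ad x by metis
  then show ?thesis using cancel x Y assms by blast
qed

lemma ker_hom: "is_kernel C k f \<Longrightarrow> k \<in> hom C (dm C k) (dm C f)"
  by (simp add: is_kernel_def hom_def)
lemma ker_f: "is_kernel C k f \<Longrightarrow> f \<in> hom C (dm C f) (cd C f)"
  by (simp add: is_kernel_def hom_def)
lemma ker_zero: "is_kernel C k f \<Longrightarrow> f \<cdot> k = zr C (dm C k) (cd C f)"
  by (simp add: is_kernel_def)

lemma ker_univ: assumes "is_kernel C k f" "t \<in> hom C Z (dm C f)" "f \<cdot> t = zr C Z (cd C f)"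
  shows "\<exists>!u. u \<in> hom C Z (dm C k) \<and> k \<cdot> u = t"
proof -
  have t: "t \<in> ar C" "cd C t = dm C f" "dm C t = Z" using assms(2) by (auto simp: hom_def)
  have U: "\<forall>t \<in> ar C. cd C t = dm C f \<and> f \<cdot> t = zr C (dm C t) (cd C f) \<longrightarrow>
        (\<exists>!u. u \<in> hom C (dm C t) (dm C k) \<and> k \<cdot> u = t)"
    using assms(1) unfolding is_kernel_def by (elim conjE)
  have "cd C t = dm C f \<and> f \<cdot> t = zr C (dm C t) (cd C f)" using t assms(3) by simp
  then have "\<exists>!u. u \<in> hom C (dm C t) (dm C k) \<and> k \<cdot> u = t" using U[rule_format, OF t(1)] by simp
  then show ?thesis using t(3) by simp
qed

lemma ker_lift: assumes "is_kernel C k f" "t \<in> hom C Z (dm C f)" "f \<cdot> t = zr C Z (cd C f)"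
  shows "\<exists>u \<in> hom C Z (dm C k). k \<cdot> u = t"
  using ker_univ[OF assms] by (elim ex1E) blast

lemma ker_mono: assumes "is_kernel C k f" "x \<in> hom C Z (dm C k)" "y \<in> hom C Z (dm C k)"
  "k \<cdot> x = k \<cdot> y" shows "x = y"
proof -
  have kh: "k \<in> hom C (dm C k) (dm C f)" using assms ker_hom by auto
  have fh: "f \<in> hom C (dm C f) (cd C f)" using assms ker_f by auto
  have t: "k \<cdot> x \<in> hom C Z (dm C f)" using kh assms by auto
  have "f \<cdot> (k \<cdot> x) = (f \<cdot> k) \<cdot> x" using assoc[OF assms(2) kh fh] .
  also have "\<dots> = zr C (dm C k) (cd C f) \<cdot> x" using ker_zero[OF assms(1)] by simp
  also have "\<dots> = zr C Z (cd C f)" using zero_l[OF assms(2)] fh hom_obs by blast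
  finally have z: "f \<cdot> (k \<cdot> x) = zr C Z (cd C f)" .
  have "\<exists>!u. u \<in> hom C Z (dm C k) \<and> k \<cdot> u = k \<cdot> x" using ker_univ[OF assms(1) t z] .
  then show ?thesis using assms by (elim ex1E) (metis)
qed

lemma coker_hom: "is_cokernel C c f \<Longrightarrow> c \<in> hom C (cd C f) (cd C c)"
  by (simp add: is_cokernel_def hom_def)
lemma coker_f: "is_cokernel C c f \<Longrightarrow> f \<in> hom C (dm C f) (cd C f)"
  by (simp add: is_cokernel_def hom_def)
lemma coker_zero: "is_cokernel C c f \<Longrightarrow> c \<cdot> f = zr C (dm C f) (cd C c)"
  by (simp add: is_cokernel_def)

lemma coker_univ: assumes "is_cokernel C c f" "t \<in> hom C (cd C f) Z" "t \<cdot> f = zr C (dm C f) Z"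
  shows "\<exists>!u. u \<in> hom C (cd C c) Z \<and> u \<cdot> c = t"
proof -
  have t: "t \<in> ar C" "dm C t = cd C f" "cd C t = Z" using assms(2) by (auto simp: hom_def)
  have U: "\<forall>t \<in> ar C. dm C t = cd C f \<and> t \<cdot> f = zr C (dm C f) (cd C t) \<longrightarrow>
        (\<exists>!u. u \<in> hom C (cd C c) (cd C t) \<and> u \<cdot> c = t)"
    using assms(1) unfolding is_cokernel_def by (elim conjE)
  have "dm C t = cd C f \<and> t \<cdot> f = zr C (dm C f) (cd C t)" using t assms(3) by simp
  then have "\<exists>!u. u \<in> hom C (cd C c) (cd C t) \<and> u \<cdot> c = t" using U[rule_format, OF t(1)] by simp
  then show ?thesis using t(3) by simp
qed

lemma coker_desc: assumes "is_cokernel C c f" "t \<in> hom C (cd C f) Z" "t \<cdot> f = zr C (dm C f) Z"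
  shows "\<exists>u \<in> hom C (cd C c) Z. u \<cdot> c = t"
  using coker_univ[OF assms] by (elim ex1E) blast

lemma coker_epi: assumes "is_cokernel C c f" "x \<in> hom C (cd C c) Z" "y \<in> hom C (cd C c) Z"
  "x \<cdot> c = y \<cdot> c" shows "x = y"
proof -
  have ch: "c \<in> hom C (cd C f) (cd C c)" using assms coker_hom by auto
  have fh: "f \<in> hom C (dm C f) (cd C f)" using assms coker_f by auto
  have t: "x \<cdot> c \<in> hom C (cd C f) Z" using ch assms by auto
  have "(x \<cdot> c) \<cdot> f = x \<cdot> (c \<cdot> f)" using assoc[OF fh ch assms(2)] by simp
  also have "\<dots> = x \<cdot> zr C (dm C f) (cd C c)" using coker_zero[OF assms(1)] by simp
  also have "\<dots> = zr C (dm C f) Z" using zero_r[OF assms(2)] fh hom_obs by blast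
  finally have z: "(x \<cdot> c) \<cdot> f = zr C (dm C f) Z" .
  have "\<exists>!u. u \<in> hom C (cd C c) Z \<and> u \<cdot> c = x \<cdot> c" using coker_univ[OF assms(1) t z] .
  then show ?thesis using assms by (elim ex1E) (metis)
qed

lemma confE: "(i, p) \<in> E \<Longrightarrow> is_kernel C i p \<and> is_cokernel C p i"
proof -
  assume a: "(i, p) \<in> E"
  have "\<forall>(i, p) \<in> E. is_kernel_cokernel_pair C i p"
    using confl unfolding conflation_category_def by (elim conjE)
  then have "is_kernel_cokernel_pair C i p" using a by blast
  then show ?thesis unfolding is_kernel_cokernel_pair_def .
qed

lemma defl_E: "deflation E p \<Longrightarrow> \<exists>k. (k, p) \<in> E" by (simp add: deflation_def)
lemma infl_E: "inflation E i \<Longrightarrow> \<exists>c. (i, c) \<in> E" by (simp add: inflation_def)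

lemma defl_coker: "deflation E p \<Longrightarrow> \<exists>k. is_cokernel C p k"
  using defl_E confE by blast
lemma infl_ker: "inflation E i \<Longrightarrow> \<exists>c. is_kernel C i c"
  using infl_E confE by blast

lemma defl_epi: assumes "deflation E p" "x \<in> hom C (cd C p) Z" "y \<in> hom C (cd C p) Z"
  "x \<cdot> p = y \<cdot> p" shows "x = y"
proof -
  obtain k where "is_cokernel C p k" using defl_coker assms(1) by blast
  then show ?thesis using coker_epi assms(2-4) by blast
qed

lemma infl_mono: assumes "inflation E i" "x \<in> hom C Z (dm C i)" "y \<in> hom C Z (dm C i)"
  "i \<cdot> x = i \<cdot> y" shows "x = y"
proof -
  obtain c where "is_kernel C i c" using infl_ker assms(1) by blast
  then show ?thesis using ker_mono assms(2-4) by blast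
qed

lemma defl_ar: "deflation E p \<Longrightarrow> p \<in> ar C"
  using defl_coker unfolding is_cokernel_def by blast
lemma infl_ar: "inflation E p \<Longrightarrow> p \<in> ar C"
  using infl_ker unfolding is_kernel_def by blast

lemma A1: "(i, p) \<in> E \<Longrightarrow> cd C i \<in> Ac \<longleftrightarrow> dm C i \<in> Ac \<and> cd C p \<in> Ac"
  using perc unfolding adm_defl_percolating_def by auto
lemma A2: "c \<in> ar C \<Longrightarrow> cd C c \<in> Ac \<Longrightarrow>
   \<exists>p i. deflation E p \<and> inflation E i \<and> cd C p = dm C i \<and> dm C i \<in> Ac \<and> c = i \<cdot> p"
  using perc unfolding adm_defl_percolating_def by auto
lemma A3: "inflation E a \<Longrightarrow> deflation E b \<Longrightarrow> dm C a = dm C b \<Longrightarrow> cd C b \<in> Ac \<Longrightarrow>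
   \<exists>P b' a'. is_pushout C a b P b' a' \<and> deflation E a' \<and> inflation E b'"
  using perc unfolding adm_defl_percolating_def by auto
lemma Ac_ob: "X \<in> Ac \<Longrightarrow> X \<in> ob C"
  using perc unfolding adm_defl_percolating_def by auto

end


context dex begin

lemma E_iso: assumes "(i,p) \<in> E" "i' \<in> ar C" "p' \<in> ar C" "cd C i' = dm C p'"
  "is_iso C a" "dm C a = dm C i" "cd C a = dm C i'"
  "is_iso C b" "dm C b = cd C i" "cd C b = cd C i'"
  "is_iso C c" "dm C c = cd C p" "cd C c = cd C p'"
  "i' \<cdot> a = b \<cdot> i" "p' \<cdot> b = c \<cdot> p" shows "(i',p') \<in> E"
proof -
  have H: "\<forall>x \<in> E. case x of (i, p) \<Rightarrow> (\<forall>i' \<in> ar C. \<forall>p' \<in> ar C. \<forall>a b c.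
        cd C i' = dm C p' \<and>
        is_iso C a \<and> dm C a = dm C i \<and> cd C a = dm C i' \<and>
        is_iso C b \<and> dm C b = cd C i \<and> cd C b = cd C i' \<and>
        is_iso C c \<and> dm C c = cd C p \<and> cd C c = cd C p' \<and>
        cp C i' a = cp C b i \<and> cp C p' b = cp C c p \<longrightarrow> (i', p') \<in> E)"
    using conjunct2[OF conjunct2[OF confl[unfolded conflation_category_def]]] .
  have "case (i,p) of (i, p) \<Rightarrow> (\<forall>i' \<in> ar C. \<forall>p' \<in> ar C. \<forall>a b c.
        cd C i' = dm C p' \<and>
        is_iso C a \<and> dm C a = dm C i \<and> cd C a = dm C i' \<and>
        is_iso C b \<and> dm C b = cd C i \<and> cd C b = cd C i' \<and>
        is_iso C c \<and> dm C c = cd C p \<and> cd C c = cd C p' \<and>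
        cp C i' a = cp C b i \<and> cp C p' b = cp C c p \<longrightarrow> (i', p') \<in> E)"
    using H assms(1) by (rule bspec)
  then have "\<forall>i' \<in> ar C. \<forall>p' \<in> ar C. \<forall>a b c.
        cd C i' = dm C p' \<and>
        is_iso C a \<and> dm C a = dm C i \<and> cd C a = dm C i' \<and>
        is_iso C b \<and> dm C b = cd C i \<and> cd C b = cd C i' \<and>
        is_iso C c \<and> dm C c = cd C p \<and> cd C c = cd C p' \<and>
        cp C i' a = cp C b i \<and> cp C p' b = cp C c p \<longrightarrow> (i', p') \<in> E"
    by (simp only: prod.case)
  then show ?thesis using assms by blast
qed

lemma iso_id: assumes "X \<in> ob C" shows "is_iso C (idt C X)"
proof -
  have h: "idt C X \<in> hom C X X" using assms by auto
  then have "idt C X \<cdot> idt C X = idt C X" using id_l by blast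
  then show ?thesis using h unfolding is_iso_def hom_def by auto
qed

lemma iso_of: assumes "\<phi> \<in> hom C a b" "\<psi> \<in> hom C b a" "\<psi> \<cdot> \<phi> = idt C a" "\<phi> \<cdot> \<psi> = idt C b"
  shows "is_iso C \<phi>"
  using assms unfolding is_iso_def hom_def by auto

lemma Ac_iso: assumes "a \<in> Ac" "\<phi> \<in> hom C a b" "\<psi> \<in> hom C b a" "\<psi> \<cdot> \<phi> = idt C a" "\<phi> \<cdot> \<psi> = idt C b"
  shows "b \<in> Ac"
proof -
  have ida: "idt C a \<in> hom C a a" using Ac_ob assms(1) by auto
  obtain p i where pi: "deflation E p" "inflation E i" "cd C p = dm C i" "dm C i \<in> Ac" "idt C a = i \<cdot> p"
    using A2[of "idt C a"] ida hom_ar hom_cd assms(1) by metis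
  have ph: "p \<in> hom C (dm C p) (cd C p)" using defl_ar pi ar_hom by blast
  have ih: "i \<in> hom C (cd C p) (cd C i)" using infl_ar pi ar_hom by metis
  have "i \<cdot> p \<in> hom C (dm C p) (cd C i)" using ph ih by blast
  then have dp: "dm C p = a" using ida pi(5) hom_dm by metis
  obtain k where kp: "(k, p) \<in> E" using defl_E pi by blast
  have kk: "is_kernel C k p" using confE kp by blast
  have kh: "k \<in> hom C (dm C k) a" using ker_hom[OF kk] dp by simp
  have ph': "p \<in> hom C a (cd C p)" using ph dp by simp
  have o: "dm C k \<in> ob C" "cd C p \<in> ob C" "b \<in> ob C" using kh ph' assms hom_obs by auto
  have i1: "\<phi> \<cdot> k \<in> hom C (dm C k) b" using kh assms by blast
  have i2: "p \<cdot> \<psi> \<in> hom C b (cd C p)" using ph' assms by blast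
  have e1: "(\<phi> \<cdot> k) \<cdot> idt C (dm C k) = \<phi> \<cdot> k" using id_r i1 by blast
  have "(p \<cdot> \<psi>) \<cdot> \<phi> = p \<cdot> (\<psi> \<cdot> \<phi>)" using assoc[OF assms(2) assms(3) ph'] by simp
  also have "\<dots> = p" using assms(4) id_r ph' by simp
  also have "\<dots> = idt C (cd C p) \<cdot> p" using id_l ph' by simp
  finally have e2: "(p \<cdot> \<psi>) \<cdot> \<phi> = idt C (cd C p) \<cdot> p" .
  have "(\<phi> \<cdot> k, p \<cdot> \<psi>) \<in> E"
  proof (rule E_iso[OF kp _ _ _ iso_id[OF o(1)] _ _ iso_of[OF assms(2-5)] _ _ iso_id[OF o(2)]])
    show "\<phi> \<cdot> k \<in> ar C" using i1 hom_ar by blast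
    show "p \<cdot> \<psi> \<in> ar C" using i2 hom_ar by blast
    show "cd C (\<phi> \<cdot> k) = dm C (p \<cdot> \<psi>)" using i1 i2 hom_cd hom_dm by metis
    show "dm C (idt C (dm C k)) = dm C k" using id_hom o hom_dm by blast
    show "cd C (idt C (dm C k)) = dm C (\<phi> \<cdot> k)" using id_hom o i1 hom_cd hom_dm by metis
    show "dm C \<phi> = cd C k" using assms kh hom_cd hom_dm by metis
    show "cd C \<phi> = cd C (\<phi> \<cdot> k)" using assms i1 hom_cd by metis
    show "dm C (idt C (cd C p)) = cd C p" using id_hom o hom_dm by blast
    show "cd C (idt C (cd C p)) = cd C (p \<cdot> \<psi>)" using id_hom o i2 hom_cd by metis
    show "(\<phi> \<cdot> k) \<cdot> idt C (dm C k) = \<phi> \<cdot> k" by (rule e1)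
    show "(p \<cdot> \<psi>) \<cdot> \<phi> = idt C (cd C p) \<cdot> p" by (rule e2)
  qed
  then have "cd C (\<phi> \<cdot> k) \<in> Ac \<longleftrightarrow> dm C (\<phi> \<cdot> k) \<in> Ac \<and> cd C (p \<cdot> \<psi>) \<in> Ac" using A1 by blast
  moreover have "cd C k \<in> Ac \<longleftrightarrow> dm C k \<in> Ac \<and> cd C p \<in> Ac" using A1 kp by blast
  moreover have "cd C k = a" using kh hom_cd by blast
  ultimately show ?thesis using assms(1) i1 i2 hom_cd hom_dm by metis
qed

end


context dex begin

lemma ker_intro: assumes "k \<in> hom C K X" "f \<in> hom C X Y" "f \<cdot> k = zr C K Y"
  "\<And>T t. t \<in> hom C T X \<Longrightarrow> f \<cdot> t = zr C T Y \<Longrightarrow> \<exists>!u. u \<in> hom C T K \<and> k \<cdot> u = t"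
  shows "is_kernel C k f"
  unfolding is_kernel_def
proof (intro conjI ballI impI)
  show "k \<in> ar C" "f \<in> ar C" using assms hom_ar by blast+
  show "cd C k = dm C f" using assms hom_cd hom_dm by metis
  show "f \<cdot> k = zr C (dm C k) (cd C f)" using assms hom_cd hom_dm by metis
  fix t assume "t \<in> ar C" "cd C t = dm C f \<and> f \<cdot> t = zr C (dm C t) (cd C f)"
  then have "t \<in> hom C (dm C t) X" "f \<cdot> t = zr C (dm C t) Y" using assms hom_cd hom_dm hom_iff by metis+
  then have "\<exists>!u. u \<in> hom C (dm C t) K \<and> k \<cdot> u = t" using assms(4) by blast
  then show "\<exists>!u. u \<in> hom C (dm C t) (dm C k) \<and> k \<cdot> u = t" using assms hom_dm by metis
qed

lemma coker_intro: assumes "c \<in> hom C Y Q" "f \<in> hom C X Y" "c \<cdot> f = zr C X Q"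
  "\<And>T t. t \<in> hom C Y T \<Longrightarrow> t \<cdot> f = zr C X T \<Longrightarrow> \<exists>!u. u \<in> hom C Q T \<and> u \<cdot> c = t"
  shows "is_cokernel C c f"
  unfolding is_cokernel_def
proof (intro conjI ballI impI)
  show "c \<in> ar C" "f \<in> ar C" using assms hom_ar by blast+
  show "dm C c = cd C f" using assms hom_cd hom_dm by metis
  show "c \<cdot> f = zr C (dm C f) (cd C c)" using assms hom_cd hom_dm by metis
  fix t assume "t \<in> ar C" "dm C t = cd C f \<and> t \<cdot> f = zr C (dm C f) (cd C t)"
  then have "t \<in> hom C Y (cd C t)" "t \<cdot> f = zr C X (cd C t)" using assms hom_cd hom_dm hom_iff by metis+
  then have "\<exists>!u. u \<in> hom C Q (cd C t) \<and> u \<cdot> c = t" using assms(4) by blast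
  then show "\<exists>!u. u \<in> hom C (cd C c) (cd C t) \<and> u \<cdot> c = t" using assms hom_cd by metis
qed

lemma coker_comp: assumes cm: "is_cokernel C c m" and e: "deflation E e" "cd C e = dm C m"
  shows "is_cokernel C c (m \<cdot> e)"
proof -
  have mh: "m \<in> hom C (dm C m) (cd C m)" using coker_f[OF cm] .
  have ch: "c \<in> hom C (cd C m) (cd C c)" using coker_hom[OF cm] .
  have eh: "e \<in> hom C (dm C e) (dm C m)" using defl_ar[OF e(1)] ar_hom e(2) by metis
  have meh: "m \<cdot> e \<in> hom C (dm C e) (cd C m)" using mh eh by blast
  have o: "dm C e \<in> ob C" "cd C c \<in> ob C" using eh ch hom_obs by blast+
  show ?thesis
  proof (rule coker_intro[OF ch meh])
    have "c \<cdot> (m \<cdot> e) = (c \<cdot> m) \<cdot> e" using assoc[OF eh mh ch] .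
    also have "\<dots> = zr C (dm C m) (cd C c) \<cdot> e" using coker_zero[OF cm] by simp
    also have "\<dots> = zr C (dm C e) (cd C c)" using zero_l[OF eh o(2)] .
    finally show "c \<cdot> (m \<cdot> e) = zr C (dm C e) (cd C c)" .
    fix T t assume th: "t \<in> hom C (cd C m) T" and tz: "t \<cdot> (m \<cdot> e) = zr C (dm C e) T"
    have oT: "T \<in> ob C" using th hom_obs by blast
    have tm: "t \<cdot> m \<in> hom C (dm C m) T" using mh th by blast
    have "(t \<cdot> m) \<cdot> e = zr C (dm C m) T \<cdot> e" using assoc[OF eh mh th] tz zero_l[OF eh oT] by simp
    then have "t \<cdot> m = zr C (dm C m) T"
      using defl_epi[OF e(1)] tm zr_hom hom_obs mh oT e(2) by (metis)
    then show "\<exists>!u. u \<in> hom C (cd C c) T \<and> u \<cdot> c = t" using coker_univ[OF cm] th mh hom_dm by metis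
  qed
qed

lemma ker_comp: assumes ke: "is_kernel C k e" and m: "inflation E m" "cd C e = dm C m"
  shows "is_kernel C k (m \<cdot> e)"
proof -
  have kh: "k \<in> hom C (dm C k) (dm C e)" using ker_hom[OF ke] .
  have eh: "e \<in> hom C (dm C e) (dm C m)" using ker_f[OF ke] m(2) by simp
  have mh: "m \<in> hom C (dm C m) (cd C m)" using infl_ar[OF m(1)] ar_hom by blast
  have meh: "m \<cdot> e \<in> hom C (dm C e) (cd C m)" using mh eh by blast
  have o: "dm C k \<in> ob C" "cd C m \<in> ob C" using kh mh hom_obs by blast+
  show ?thesis
  proof (rule ker_intro[OF kh meh])
    have "(m \<cdot> e) \<cdot> k = m \<cdot> (e \<cdot> k)" using assoc[OF kh eh mh] by simp
    also have "\<dots> = m \<cdot> zr C (dm C k) (dm C m)" using ker_zero[OF ke] m(2) by simp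
    also have "\<dots> = zr C (dm C k) (cd C m)" using zero_r[OF mh o(1)] .
    finally show "(m \<cdot> e) \<cdot> k = zr C (dm C k) (cd C m)" .
    fix T t assume th: "t \<in> hom C T (dm C e)" and tz: "(m \<cdot> e) \<cdot> t = zr C T (cd C m)"
    have oT: "T \<in> ob C" using th hom_obs by blast
    have et: "e \<cdot> t \<in> hom C T (dm C m)" using eh th by blast
    have "m \<cdot> (e \<cdot> t) = m \<cdot> zr C T (dm C m)" using assoc[OF th eh mh] tz zero_r[OF mh oT] by simp
    then have "e \<cdot> t = zr C T (dm C m)"
      using infl_mono[OF m(1)] et zr_hom hom_obs mh oT by (metis)
    then show "\<exists>!u. u \<in> hom C T (dm C k) \<and> k \<cdot> u = t" using ker_univ[OF ke] th m(2) by metis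
  qed
qed

lemma coker_Ac: assumes "h \<in> hom C B D" "D \<in> Ac"
  shows "\<exists>r. is_cokernel C r h \<and> cd C r \<in> Ac"
proof -
  obtain e m where em: "deflation E e" "inflation E m" "cd C e = dm C m" "dm C m \<in> Ac" "h = m \<cdot> e"
    using A2[of h] assms hom_ar hom_cd by metis
  obtain c where mc: "(m, c) \<in> E" using infl_E em by blast
  have cm: "is_cokernel C c m" using confE mc by blast
  have "is_cokernel C c h" using coker_comp[OF cm em(1) em(3)] em(5) by simp
  moreover have "cd C m = D"
    using em assms hom_cd defl_ar infl_ar ar_hom comp_hom by metis
  ultimately show ?thesis using A1[OF mc] assms by blast
qed

lemma final: assumes "f \<in> hom C X P" "X \<in> Ac" "P \<in> Ac"
  shows "admissible C E f \<and> kernel_in C Ac f \<and> cokernel_in C Ac f"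
proof -
  obtain e m where em: "deflation E e" "inflation E m" "cd C e = dm C m" "dm C m \<in> Ac" "f = m \<cdot> e"
    using A2[of f] assms hom_ar hom_cd by metis
  have eh: "e \<in> hom C (dm C e) (dm C m)" using defl_ar[OF em(1)] ar_hom em(3) by metis
  have mh: "m \<in> hom C (dm C m) (cd C m)" using infl_ar[OF em(2)] ar_hom by blast
  have "m \<cdot> e \<in> hom C (dm C e) (cd C m)" using eh mh by blast
  then have X: "dm C e = X" and PP: "cd C m = P" using assms em(5) hom_cd hom_dm by metis+
  have adm: "admissible C E f" unfolding admissible_def using em by blast
  obtain k where ke: "(k, e) \<in> E" using defl_E em by blast
  have kk: "is_kernel C k e" using confE ke by blast
  have "cd C k = X" using ker_hom[OF kk] X hom_cd by blast
  then have "dm C k \<in> Ac" using A1[OF ke] assms by blast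
  then have ki: "kernel_in C Ac f" unfolding kernel_in_def using ker_comp[OF kk em(2) em(3)] em(5) by blast
  obtain c where mc: "(m, c) \<in> E" using infl_E em by blast
  have cm: "is_cokernel C c m" using confE mc by blast
  have "cd C c \<in> Ac" using A1[OF mc] PP assms by blast
  then have "cokernel_in C Ac f" unfolding cokernel_in_def using coker_comp[OF cm em(1) em(3)] em(5) by blast
  then show ?thesis using adm ki by blast
qed

end


context dex begin

lemma biprod: assumes "X1 \<in> ob C" "X2 \<in> ob C"
  shows "\<exists>S \<in> ob C. \<exists>i1 \<in> hom C X1 S. \<exists>i2 \<in> hom C X2 S.
        \<exists>p1 \<in> hom C S X1. \<exists>p2 \<in> hom C S X2.
          cp C p1 i1 = idt C X1 \<and> cp C p2 i2 = idt C X2 \<and>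
          cp C p1 i2 = zr C X2 X1 \<and> cp C p2 i1 = zr C X1 X2 \<and>
          ad C (cp C i1 p1) (cp C i2 p2) = idt C S"
proof -
  have "has_biproducts C" using addit unfolding is_additive_def by blast
  then show ?thesis unfolding has_biproducts_def using assms by blast
qed

lemma biprod_Ac: assumes Q: "Q \<in> Ac" and A: "A \<in> Ac"
  shows "\<exists>S i1 i2 p1 p2. S \<in> Ac \<and> i1 \<in> hom C Q S \<and> i2 \<in> hom C A S \<and> p1 \<in> hom C S Q \<and> p2 \<in> hom C S A \<and>
          p1 \<cdot> i1 = idt C Q \<and> p2 \<cdot> i2 = idt C A \<and>
          p1 \<cdot> i2 = zr C A Q \<and> p2 \<cdot> i1 = zr C Q A \<and>
          ad C (i1 \<cdot> p1) (i2 \<cdot> p2) = idt C S"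
proof -
  obtain S i1 i2 p1 p2 where S: "S \<in> ob C" "i1 \<in> hom C Q S" "i2 \<in> hom C A S" "p1 \<in> hom C S Q" "p2 \<in> hom C S A"
     "p1 \<cdot> i1 = idt C Q" "p2 \<cdot> i2 = idt C A" "p1 \<cdot> i2 = zr C A Q" "p2 \<cdot> i1 = zr C Q A"
     "ad C (i1 \<cdot> p1) (i2 \<cdot> p2) = idt C S"
    using biprod[OF Ac_ob[OF Q] Ac_ob[OF A]] by blast
  have oQ: "Q \<in> ob C" and oA: "A \<in> ob C" using Q A Ac_ob by auto
  obtain e m where em: "deflation E e" "inflation E m" "cd C e = dm C m" "dm C m \<in> Ac" "p2 = m \<cdot> e"
    using A2[of p2] S A hom_ar hom_cd by metis
  define A' where "A' = dm C m"
  have eh0: "e \<in> hom C (dm C e) A'" using defl_ar[OF em(1)] ar_hom em(3) A'_def by metis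
  have mh0: "m \<in> hom C A' (cd C m)" using infl_ar[OF em(2)] ar_hom A'_def by blast
  have "m \<cdot> e \<in> hom C (dm C e) (cd C m)" using eh0 mh0 by blast
  then have "dm C e = S" "cd C m = A" using S em(5) hom_cd hom_dm by metis+
  then have eh: "e \<in> hom C S A'" and mh: "m \<in> hom C A' A" using eh0 mh0 by auto
  have oA': "A' \<in> ob C" using eh hom_obs by blast
  obtain k where ke: "(k, e) \<in> E" using defl_E em by blast
  have kk: "is_kernel C k e" using confE ke by blast
  define K where "K = dm C k"
  have kh: "k \<in> hom C K S" using ker_hom[OF kk] K_def eh hom_dm by metis
  have oK: "K \<in> ob C" using kh hom_obs by blast
  have ek: "e \<cdot> k = zr C K A'" using ker_zero[OF kk] K_def eh hom_cd by metis
  have ei1: "e \<cdot> i1 \<in> hom C Q A'" using eh S by blast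
  have "m \<cdot> (e \<cdot> i1) = p2 \<cdot> i1" using assoc[OF S(2) eh mh] em(5) by simp
  also have "\<dots> = m \<cdot> zr C Q A'" using S(9) zero_r[OF mh oQ] by simp
  finally have "e \<cdot> i1 = zr C Q A'" using infl_mono[OF em(2)] ei1 zr_hom[OF oQ oA'] A'_def by metis
  then obtain \<alpha> where al: "\<alpha> \<in> hom C Q K" "k \<cdot> \<alpha> = i1"
    using ker_lift[OF kk, of i1 Q] S(2) eh hom_dm hom_cd K_def by metis
  define \<beta> where "\<beta> = p1 \<cdot> k"
  have be: "\<beta> \<in> hom C K Q" using \<beta>_def kh S by blast
  have ba: "\<beta> \<cdot> \<alpha> = idt C Q" using \<beta>_def assoc[OF al(1) kh S(4)] al(2) S(6) by simp
  have i1p1: "i1 \<cdot> p1 \<in> hom C S S" and i2p2: "i2 \<cdot> p2 \<in> hom C S S" using S by blast+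
  have "(i2 \<cdot> p2) \<cdot> k = i2 \<cdot> (p2 \<cdot> k)" using assoc[OF kh S(5) S(3)] by simp
  also have "\<dots> = i2 \<cdot> (m \<cdot> (e \<cdot> k))" using assoc[OF kh eh mh] em(5) by simp
  also have "\<dots> = i2 \<cdot> (m \<cdot> zr C K A')" using ek by simp
  also have "\<dots> = i2 \<cdot> zr C K A" using zero_r[OF mh oK] by simp
  also have "\<dots> = zr C K S" using zero_r[OF S(3) oK] by simp
  finally have z2: "(i2 \<cdot> p2) \<cdot> k = zr C K S" .
  have "k = idt C S \<cdot> k" using id_l kh by simp
  also have "\<dots> = ad C ((i1 \<cdot> p1) \<cdot> k) ((i2 \<cdot> p2) \<cdot> k)" using S(10) distr[OF kh i1p1 i2p2] by simp
  also have "\<dots> = (i1 \<cdot> p1) \<cdot> k" using z2 ad_zr kh i1p1 by (metis comp_hom)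
  finally have kk2: "(i1 \<cdot> p1) \<cdot> k = k" by simp
  have ab: "\<alpha> \<cdot> \<beta> \<in> hom C K K" using al be by blast
  have "k \<cdot> (\<alpha> \<cdot> \<beta>) = (k \<cdot> \<alpha>) \<cdot> \<beta>" using assoc[OF be al(1) kh] .
  also have "\<dots> = (i1 \<cdot> p1) \<cdot> k" using al(2) \<beta>_def assoc[OF kh S(4) S(2)] by simp
  also have "\<dots> = k \<cdot> idt C K" using kk2 id_r kh by simp
  finally have "\<alpha> \<cdot> \<beta> = idt C K" using ker_mono[OF kk] ab id_hom[OF oK] K_def by metis
  then have "K \<in> Ac" using Ac_iso[OF Q al(1) be ba] by blast
  moreover have "cd C k = S" using kh hom_cd by blast
  moreover have "cd C e = A'" using eh hom_cd by blast
  ultimately have "S \<in> Ac" using A1[OF ke] K_def em(4) A'_def by simp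
  then show ?thesis using S by blast
qed

end


context dex begin

lemma main_exists:
  assumes adm: "admissible C E f" and ki: "kernel_in C Ac f" and ci: "cokernel_in C Ac f"
    and gar: "g \<in> ar C" and dg: "dm C g = dm C f" and gA: "cd C g \<in> Ac"
  shows "\<exists>P f0 g0. is_pushout C f g P f0 g0 \<and> P \<in> Ac"
proof -
  define X where "X = dm C f"
  define Y where "Y = cd C f"
  define A where "A = cd C g"
  obtain p i where pi: "deflation E p" "inflation E i" "cd C p = dm C i" "f = i \<cdot> p"
    using adm unfolding admissible_def by blast
  define I where "I = cd C p"
  have ph0: "p \<in> hom C (dm C p) I" using defl_ar[OF pi(1)] ar_hom I_def by blast
  have ih0: "i \<in> hom C I (cd C i)" using infl_ar[OF pi(2)] ar_hom I_def pi(3) by metis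
  have "i \<cdot> p \<in> hom C (dm C p) (cd C i)" using ph0 ih0 by blast
  then have "dm C p = X" "cd C i = Y" using pi(4) X_def Y_def hom_dm hom_cd by metis+
  then have ph: "p \<in> hom C X I" and ih: "i \<in> hom C I Y" using ph0 ih0 by auto
  have fh: "f \<in> hom C X Y" using ph ih pi(4) by blast
  have gh: "g \<in> hom C X A" using gar ar_hom dg X_def A_def by metis
  have oX: "X \<in> ob C" and oY: "Y \<in> ob C" and oI: "I \<in> ob C" and oA: "A \<in> ob C"
    using fh gh ph hom_obs by blast+
  obtain k where kpE: "(k, p) \<in> E" using defl_E pi by blast
  have kp: "is_kernel C k p" using confE kpE by blast
  define K where "K = dm C k"
  have kh: "k \<in> hom C K X" using ker_hom[OF kp] K_def ph hom_dm by metis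
  have oK: "K \<in> ob C" using kh hom_obs by blast
  obtain k0 where k0: "is_kernel C k0 f" "dm C k0 \<in> Ac" using ki unfolding kernel_in_def by blast
  define K0 where "K0 = dm C k0"
  have k0h: "k0 \<in> hom C K0 X" using ker_hom[OF k0(1)] K0_def X_def by simp
  have oK0: "K0 \<in> ob C" using k0h hom_obs by blast
  obtain c0 where c0: "is_cokernel C c0 f" "cd C c0 \<in> Ac" using ci unfolding cokernel_in_def by blast
  define C0 where "C0 = cd C c0"
  have c0h: "c0 \<in> hom C Y C0" using coker_hom[OF c0(1)] C0_def Y_def by simp
  have oC0: "C0 \<in> ob C" using c0h hom_obs by blast
  have gk0: "g \<cdot> k0 \<in> hom C K0 A" using gh k0h by blast
  obtain r where r: "is_cokernel C r (g \<cdot> k0)" "cd C r \<in> Ac" using coker_Ac[OF gk0] gA A_def by blast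
  define P1 where "P1 = cd C r"
  have rh: "r \<in> hom C A P1" using coker_hom[OF r(1)] P1_def gk0 hom_cd by metis
  have oP1: "P1 \<in> ob C" using rh hom_obs by blast
  have rgk0: "r \<cdot> (g \<cdot> k0) = zr C K0 P1" using coker_zero[OF r(1)] gk0 hom_dm P1_def by metis
  have "f \<cdot> k = i \<cdot> (p \<cdot> k)" using assoc[OF kh ph ih] pi(4) by simp
  also have "\<dots> = i \<cdot> zr C K I" using ker_zero[OF kp] K_def I_def by simp
  also have "\<dots> = zr C K Y" using zero_r[OF ih oK] .
  finally have fk: "f \<cdot> k = zr C K Y" .
  obtain \<beta> where be: "\<beta> \<in> hom C K K0" "k0 \<cdot> \<beta> = k"
    using ker_lift[OF k0(1), of k K] kh fk X_def Y_def K0_def by metis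
  have rg: "r \<cdot> g \<in> hom C X P1" using rh gh by blast
  have "(r \<cdot> g) \<cdot> k = (r \<cdot> g) \<cdot> (k0 \<cdot> \<beta>)" using be by simp
  also have "\<dots> = ((r \<cdot> g) \<cdot> k0) \<cdot> \<beta>" using assoc[OF be(1) k0h rg] .
  also have "\<dots> = (r \<cdot> (g \<cdot> k0)) \<cdot> \<beta>" using assoc[OF k0h gh rh] by simp
  also have "\<dots> = zr C K P1" using rgk0 zero_l[OF be(1) oP1] by simp
  finally have rgk: "(r \<cdot> g) \<cdot> k = zr C K P1" .
  obtain g1 where g1: "g1 \<in> hom C I P1" "g1 \<cdot> p = r \<cdot> g"
    using coker_desc[OF conjunct2[OF confE[OF kpE]], of "r \<cdot> g" P1] rg rgk kh hom_cd hom_dm K_def I_def by metis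
  obtain d j2 where dj: "deflation E d" "inflation E j2" "cd C d = dm C j2" "dm C j2 \<in> Ac" "g1 = j2 \<cdot> d"
    using A2[of g1] g1 r(2) P1_def hom_ar hom_cd by metis
  define A2 where "A2 = dm C j2"
  have dh0: "d \<in> hom C (dm C d) A2" using defl_ar[OF dj(1)] ar_hom dj(3) A2_def by metis
  have jh0: "j2 \<in> hom C A2 (cd C j2)" using infl_ar[OF dj(2)] ar_hom A2_def by blast
  have "j2 \<cdot> d \<in> hom C (dm C d) (cd C j2)" using dh0 jh0 by blast
  then have "dm C d = I" "cd C j2 = P1" using g1 dj(5) hom_dm hom_cd by metis+
  then have dh: "d \<in> hom C I A2" and jh: "j2 \<in> hom C A2 P1" using dh0 jh0 by auto
  have oA2: "A2 \<in> ob C" using dh hom_obs by blast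
  obtain Q b' a' where po: "is_pushout C i d Q b' a'" "deflation E a'" "inflation E b'"
    using A3[OF pi(2) dj(1)] ih dh hom_dm hom_cd dj(4) A2_def by metis
  have oQ: "Q \<in> ob C" using po(1) unfolding is_pushout_def by blast
  have b'h: "b' \<in> hom C A2 Q" using po(1) dh hom_cd unfolding is_pushout_def by metis
  have a'h: "a' \<in> hom C Y Q" using po(1) ih hom_cd unfolding is_pushout_def by metis
  have bd: "b' \<cdot> d = a' \<cdot> i" using po(1) unfolding is_pushout_def by blast
  have poU: "\<And>Z u v. Z \<in> ob C \<Longrightarrow> u \<in> hom C A2 Z \<Longrightarrow> v \<in> hom C Y Z \<Longrightarrow> u \<cdot> d = v \<cdot> i \<Longrightarrow>
      \<exists>w. w \<in> hom C Q Z \<and> w \<cdot> b' = u \<and> w \<cdot> a' = v"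
  proof -
    fix Z u v assume "Z \<in> ob C" "u \<in> hom C A2 Z" "v \<in> hom C Y Z" "u \<cdot> d = v \<cdot> i"
    then show "\<exists>w. w \<in> hom C Q Z \<and> w \<cdot> b' = u \<and> w \<cdot> a' = v"
      using po(1) dh ih hom_cd unfolding is_pushout_def by (metis (no_types, lifting))
  qed
  have c0f: "c0 \<cdot> f = zr C X C0" using coker_zero[OF c0(1)] X_def C0_def by simp
  have c0i: "c0 \<cdot> i \<in> hom C I C0" using c0h ih by blast
  have "(c0 \<cdot> i) \<cdot> p = zr C I C0 \<cdot> p" using assoc[OF ph ih c0h] pi(4) c0f zero_l[OF ph oC0] by simp
  then have c0i0: "c0 \<cdot> i = zr C I C0" using defl_epi[OF pi(1)] c0i zr_hom[OF oI oC0] I_def by metis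
  have "zr C A2 C0 \<cdot> d = c0 \<cdot> i" using zero_l[OF dh oC0] c0i0 by simp
  then obtain c'' where c'': "c'' \<in> hom C Q C0" "c'' \<cdot> b' = zr C A2 C0" "c'' \<cdot> a' = c0"
    using poU[OF oC0 zr_hom[OF oA2 oC0] c0h] by blast
  obtain s where bsE: "(b', s) \<in> E" using infl_E po(3) by blast
  have sb: "is_cokernel C s b'" using confE bsE by blast
  define S' where "S' = cd C s"
  have sh: "s \<in> hom C Q S'" using coker_hom[OF sb] S'_def b'h hom_cd by metis
  have oS': "S' \<in> ob C" using sh hom_obs by blast
  have sbz: "s \<cdot> b' = zr C A2 S'" using coker_zero[OF sb] S'_def b'h hom_dm by metis
  have dp: "d \<cdot> p \<in> hom C X A2" using dh ph by blast
  have sa: "s \<cdot> a' \<in> hom C Y S'" using sh a'h by blast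
  have "(s \<cdot> a') \<cdot> f = s \<cdot> (a' \<cdot> f)" using assoc[OF fh a'h sh] by simp
  also have "\<dots> = s \<cdot> ((a' \<cdot> i) \<cdot> p)" using assoc[OF ph ih a'h] pi(4) by simp
  also have "\<dots> = s \<cdot> ((b' \<cdot> d) \<cdot> p)" using bd by simp
  also have "\<dots> = s \<cdot> (b' \<cdot> (d \<cdot> p))" using assoc[OF ph dh b'h] by simp
  also have "\<dots> = (s \<cdot> b') \<cdot> (d \<cdot> p)" using assoc[OF dp b'h sh] .
  also have "\<dots> = zr C X S'" using sbz zero_l[OF dp oS'] by simp
  finally have saf: "(s \<cdot> a') \<cdot> f = zr C X S'" .
  obtain t where t: "t \<in> hom C C0 S'" "t \<cdot> c0 = s \<cdot> a'"
    using coker_desc[OF c0(1) _ ] sa saf X_def Y_def C0_def by metis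
  obtain t' where t': "t' \<in> hom C S' C0" "t' \<cdot> s = c''"
    using coker_desc[OF sb, of c'' C0] c''(1,2) b'h hom_cd hom_dm S'_def by metis
  have tc: "t \<cdot> c'' \<in> hom C Q S'" using t c'' by blast
  have "(t \<cdot> c'') \<cdot> a' = s \<cdot> a'" using assoc[OF a'h c''(1) t(1)] c''(3) t(2) by simp
  then have tcs: "t \<cdot> c'' = s" using defl_epi[OF po(2)] tc sh a'h hom_cd by metis
  have tt': "t \<cdot> t' \<in> hom C S' S'" using t t' by blast
  have "(t \<cdot> t') \<cdot> s = idt C S' \<cdot> s" using assoc[OF sh t'(1) t(1)] t'(2) tcs id_l[OF sh] by simp
  then have tt'i: "t \<cdot> t' = idt C S'" using coker_epi[OF sb] tt' id_hom[OF oS'] S'_def by metis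
  have t't: "t' \<cdot> t \<in> hom C C0 C0" using t t' by blast
  have "(t' \<cdot> t) \<cdot> c0 = t' \<cdot> (s \<cdot> a')" using assoc[OF c0h t(1) t'(1)] t(2) by simp
  also have "\<dots> = c0" using assoc[OF a'h sh t'(1)] t'(2) c''(3) by simp
  also have "\<dots> = idt C C0 \<cdot> c0" using id_l[OF c0h] by simp
  finally have t'ti: "t' \<cdot> t = idt C C0" using coker_epi[OF c0(1)] t't id_hom[OF oC0] C0_def by metis
  have "S' \<in> Ac" using Ac_iso[OF _ t(1) t'(1) t'ti tt'i] c0(2) C0_def by blast
  then have QA: "Q \<in> Ac" using A1[OF bsE] b'h hom_cd hom_dm S'_def dj(4) A2_def by metis
  obtain S i1 i2 p1 p2 where S: "S \<in> Ac" "i1 \<in> hom C Q S" "i2 \<in> hom C A S" "p1 \<in> hom C S Q" "p2 \<in> hom C S A"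
     "p1 \<cdot> i1 = idt C Q" "p2 \<cdot> i2 = idt C A" "p1 \<cdot> i2 = zr C A Q" "p2 \<cdot> i1 = zr C Q A"
     "ad C (i1 \<cdot> p1) (i2 \<cdot> p2) = idt C S"
    using biprod_Ac[OF QA] gA A_def by blast
  have oS: "S \<in> ob C" using S(1) Ac_ob by blast
  define n where "n = ng C g"
  have nh: "n \<in> hom C X A" using gh n_def by blast
  have gn: "ad C g n = zr C X A" using ad_ng[OF gh] n_def by simp
  have a'f: "a' \<cdot> f \<in> hom C X Q" using a'h fh by blast
  have x1: "i1 \<cdot> (a' \<cdot> f) \<in> hom C X S" using a'f S(2) by blast
  have x2: "i2 \<cdot> n \<in> hom C X S" using nh S(3) by blast
  define \<phi> where "\<phi> = ad C (i1 \<cdot> (a' \<cdot> f)) (i2 \<cdot> n)"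
  have phh: "\<phi> \<in> hom C X S" using x1 x2 \<phi>_def by blast
  obtain q where q: "is_cokernel C q \<phi>" "cd C q \<in> Ac" using coker_Ac[OF phh S(1)] by blast
  define P where "P = cd C q"
  have qh: "q \<in> hom C S P" using coker_hom[OF q(1)] P_def phh hom_cd by metis
  have oP: "P \<in> ob C" using qh hom_obs by blast
  have qphi: "q \<cdot> \<phi> = zr C X P" using coker_zero[OF q(1)] P_def phh hom_dm by metis
  define f0 where "f0 = q \<cdot> i2"
  define g0 where "g0 = q \<cdot> (i1 \<cdot> a')"
  have i1a: "i1 \<cdot> a' \<in> hom C Y S" using a'h S(2) by blast
  have f0h: "f0 \<in> hom C A P" using f0_def qh S(3) by blast
  have g0h: "g0 \<in> hom C Y P" using g0_def qh i1a by blast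
  have comm: "f0 \<cdot> g = g0 \<cdot> f"
  proof -
    have xh: "g0 \<cdot> f \<in> hom C X P" using g0h fh by blast
    have yn: "f0 \<cdot> n \<in> hom C X P" using f0h nh by blast
    have yg: "f0 \<cdot> g \<in> hom C X P" using f0h gh by blast
    have e1: "q \<cdot> (i1 \<cdot> (a' \<cdot> f)) = g0 \<cdot> f"
      using assoc[OF fh a'h S(2)] assoc[OF fh i1a qh] g0_def by simp
    have e2: "q \<cdot> (i2 \<cdot> n) = f0 \<cdot> n" using assoc[OF nh S(3) qh] f0_def by simp
    have "ad C (g0 \<cdot> f) (f0 \<cdot> n) = q \<cdot> \<phi>" using distl[OF x1 x2 qh] e1 e2 \<phi>_def by simp
    also have "\<dots> = f0 \<cdot> zr C X A" using qphi zero_r[OF f0h oX] by simp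
    also have "\<dots> = ad C (f0 \<cdot> g) (f0 \<cdot> n)" using distl[OF gh nh f0h] gn by simp
    finally show ?thesis using cancel[OF yg xh yn] by simp
  qed
  have univ: "\<And>Z u v. Z \<in> ob C \<Longrightarrow> u \<in> hom C A Z \<Longrightarrow> v \<in> hom C Y Z \<Longrightarrow> u \<cdot> g = v \<cdot> f \<Longrightarrow>
      \<exists>!w. w \<in> hom C P Z \<and> w \<cdot> f0 = u \<and> w \<cdot> g0 = v"
  proof -
    fix Z u v assume oZ: "Z \<in> ob C" and uh: "u \<in> hom C A Z" and vh: "v \<in> hom C Y Z"
      and uv: "u \<cdot> g = v \<cdot> f"
    have "u \<cdot> (g \<cdot> k0) = (v \<cdot> f) \<cdot> k0" using assoc[OF k0h gh uh] uv by simp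
    also have "\<dots> = v \<cdot> (f \<cdot> k0)" using assoc[OF k0h fh vh] by simp
    also have "\<dots> = zr C K0 Z" using ker_zero[OF k0(1)] K0_def Y_def zero_r[OF vh oK0] by simp
    finally have "u \<cdot> (g \<cdot> k0) = zr C K0 Z" .
    then obtain u1 where u1: "u1 \<in> hom C P1 Z" "u1 \<cdot> r = u"
      using coker_desc[OF r(1), of u Z] uh gk0 hom_cd hom_dm P1_def by metis
    have u1g1: "u1 \<cdot> g1 \<in> hom C I Z" using u1 g1 by blast
    have vi: "v \<cdot> i \<in> hom C I Z" using vh ih by blast
    have "(u1 \<cdot> g1) \<cdot> p = u1 \<cdot> (r \<cdot> g)" using assoc[OF ph g1(1) u1(1)] g1(2) by simp
    also have "\<dots> = v \<cdot> f" using assoc[OF gh rh u1(1)] u1(2) uv by simp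
    also have "\<dots> = (v \<cdot> i) \<cdot> p" using assoc[OF ph ih vh] pi(4) by simp
    finally have "u1 \<cdot> g1 = v \<cdot> i" using defl_epi[OF pi(1)] u1g1 vi I_def by metis
    then have w2d: "(u1 \<cdot> j2) \<cdot> d = v \<cdot> i" using assoc[OF dh jh u1(1)] dj(5) by simp
    have w2h: "u1 \<cdot> j2 \<in> hom C A2 Z" using u1 jh by blast
    obtain v' where v': "v' \<in> hom C Q Z" "v' \<cdot> b' = u1 \<cdot> j2" "v' \<cdot> a' = v"
      using poU[OF oZ w2h vh w2d] by blast
    define \<rho> where "\<rho> = ad C (v' \<cdot> p1) (u \<cdot> p2)"
    have vp1: "v' \<cdot> p1 \<in> hom C S Z" using v' S by blast
    have up2: "u \<cdot> p2 \<in> hom C S Z" using uh S by blast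
    have rhoh: "\<rho> \<in> hom C S Z" using vp1 up2 \<rho>_def by blast
    have "\<rho> \<cdot> i1 = ad C ((v' \<cdot> p1) \<cdot> i1) ((u \<cdot> p2) \<cdot> i1)" using distr[OF S(2) vp1 up2] \<rho>_def by simp
    also have "\<dots> = ad C (v' \<cdot> (p1 \<cdot> i1)) (u \<cdot> (p2 \<cdot> i1))"
      using assoc[OF S(2) S(4) v'(1)] assoc[OF S(2) S(5) uh] by simp
    also have "\<dots> = v'" using S(6) S(9) id_r[OF v'(1)] zero_r[OF uh oQ] ad_zr[OF v'(1)] by simp
    finally have ri1: "\<rho> \<cdot> i1 = v'" .
    have "\<rho> \<cdot> i2 = ad C ((v' \<cdot> p1) \<cdot> i2) ((u \<cdot> p2) \<cdot> i2)" using distr[OF S(3) vp1 up2] \<rho>_def by simp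
    also have "\<dots> = ad C (v' \<cdot> (p1 \<cdot> i2)) (u \<cdot> (p2 \<cdot> i2))"
      using assoc[OF S(3) S(4) v'(1)] assoc[OF S(3) S(5) uh] by simp
    also have "\<dots> = u" using S(7) S(8) id_r[OF uh] zero_r[OF v'(1) oA] zr_l_ad[OF uh] by simp
    finally have ri2: "\<rho> \<cdot> i2 = u" .
    have "\<rho> \<cdot> \<phi> = ad C (\<rho> \<cdot> (i1 \<cdot> (a' \<cdot> f))) (\<rho> \<cdot> (i2 \<cdot> n))" using distl[OF x1 x2 rhoh] \<phi>_def by simp
    also have "\<dots> = ad C ((\<rho> \<cdot> i1) \<cdot> (a' \<cdot> f)) ((\<rho> \<cdot> i2) \<cdot> n)"
      using assoc[OF a'f S(2) rhoh] assoc[OF nh S(3) rhoh] by simp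
    also have "\<dots> = ad C (v \<cdot> f) (u \<cdot> n)" using ri1 ri2 assoc[OF fh a'h v'(1)] v'(3) by simp
    also have "\<dots> = u \<cdot> zr C X A" using uv distl[OF gh nh uh] gn by simp
    also have "\<dots> = zr C X Z" using zero_r[OF uh oX] .
    finally have rphi: "\<rho> \<cdot> \<phi> = zr C X Z" .
    have ex1: "\<exists>!w. w \<in> hom C P Z \<and> w \<cdot> q = \<rho>"
      using coker_univ[OF q(1), of \<rho> Z] rhoh rphi phh hom_cd hom_dm P_def by metis
    then obtain w where w: "w \<in> hom C P Z" "w \<cdot> q = \<rho>" by blast
    have wf0: "w \<cdot> f0 = u" using assoc[OF S(3) qh w(1)] w(2) ri2 f0_def by simp
    have wg0: "w \<cdot> g0 = v" using assoc[OF i1a qh w(1)] w(2) assoc[OF a'h S(2) rhoh] ri1 v'(3) g0_def by simp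
    have uniq: "\<And>w'. w' \<in> hom C P Z \<Longrightarrow> w' \<cdot> f0 = u \<Longrightarrow> w' \<cdot> g0 = v \<Longrightarrow> w' \<cdot> q = \<rho>"
    proof -
      fix w' assume w': "w' \<in> hom C P Z" "w' \<cdot> f0 = u" "w' \<cdot> g0 = v"
      have wq: "w' \<cdot> q \<in> hom C S Z" using w' qh by blast
      have wqi1: "(w' \<cdot> q) \<cdot> i1 \<in> hom C Q Z" using wq S by blast
      have "((w' \<cdot> q) \<cdot> i1) \<cdot> a' = v' \<cdot> a'"
        using assoc[OF a'h S(2) wq] assoc[OF i1a qh w'(1)] w'(3) v'(3) g0_def by simp
      then have e1: "(w' \<cdot> q) \<cdot> i1 = v'" using defl_epi[OF po(2)] wqi1 v'(1) a'h hom_cd by metis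
      have e2: "(w' \<cdot> q) \<cdot> i2 = u" using assoc[OF S(3) qh w'(1)] w'(2) f0_def by simp
      have i1p1: "i1 \<cdot> p1 \<in> hom C S S" and i2p2: "i2 \<cdot> p2 \<in> hom C S S" using S by blast+
      have "w' \<cdot> q = (w' \<cdot> q) \<cdot> idt C S" using id_r[OF wq] by simp
      also have "\<dots> = ad C ((w' \<cdot> q) \<cdot> (i1 \<cdot> p1)) ((w' \<cdot> q) \<cdot> (i2 \<cdot> p2))"
        using S(10) distl[OF i1p1 i2p2 wq] by simp
      also have "\<dots> = ad C (((w' \<cdot> q) \<cdot> i1) \<cdot> p1) (((w' \<cdot> q) \<cdot> i2) \<cdot> p2)"
        using assoc[OF S(4) S(2) wq] assoc[OF S(5) S(3) wq] by simp
      also have "\<dots> = \<rho>" using e1 e2 \<rho>_def by simp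
      finally show "w' \<cdot> q = \<rho>" .
    qed
    show "\<exists>!w. w \<in> hom C P Z \<and> w \<cdot> f0 = u \<and> w \<cdot> g0 = v"
    proof (rule ex1I[of _ w])
      show "w \<in> hom C P Z \<and> w \<cdot> f0 = u \<and> w \<cdot> g0 = v" using w wf0 wg0 by blast
      fix w' assume "w' \<in> hom C P Z \<and> w' \<cdot> f0 = u \<and> w' \<cdot> g0 = v"
      then have "w' \<in> hom C P Z" "w' \<cdot> q = \<rho>" using uniq by blast+
      then show "w' = w" using ex1 w by blast
    qed
  qed
  have "is_pushout C f g P f0 g0"
    unfolding is_pushout_def
  proof (intro conjI ballI impI)
    show "f \<in> ar C" "g \<in> ar C" using fh gh hom_ar by blast+
    show "dm C f = dm C g" using dg by simp
    show "P \<in> ob C" by (rule oP)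
    show "f0 \<in> hom C (cd C g) P" using f0h A_def by simp
    show "g0 \<in> hom C (cd C f) P" using g0h Y_def by simp
    show "f0 \<cdot> g = g0 \<cdot> f" by (rule comm)
    fix Z u v assume "Z \<in> ob C" "u \<in> hom C (cd C g) Z" "v \<in> hom C (cd C f) Z" "u \<cdot> g = v \<cdot> f"
    then show "\<exists>!w. w \<in> hom C P Z \<and> w \<cdot> f0 = u \<and> w \<cdot> g0 = v" using univ A_def Y_def by simp
  qed
  then show ?thesis using q(2) P_def by blast
qed
end


context dex begin

lemma po_univ: assumes "is_pushout C f g P f0 g0" "Z \<in> ob C" "u \<in> hom C (cd C g) Z"
  "v \<in> hom C (cd C f) Z" "u \<cdot> g = v \<cdot> f"
  shows "\<exists>!w. w \<in> hom C P Z \<and> w \<cdot> f0 = u \<and> w \<cdot> g0 = v"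
  using assms unfolding is_pushout_def by blast

lemma po_data: assumes "is_pushout C f g P f0 g0"
  shows "P \<in> ob C" "f0 \<in> hom C (cd C g) P" "g0 \<in> hom C (cd C f) P" "f0 \<cdot> g = g0 \<cdot> f"
    "g \<in> hom C (dm C f) (cd C g)" "f \<in> hom C (dm C f) (cd C f)"
  using assms unfolding is_pushout_def hom_def by auto

lemma po_self: assumes po: "is_pushout C f g P f0 g0" and w: "w \<in> hom C P P" "w \<cdot> f0 = f0" "w \<cdot> g0 = g0"
  shows "w = idt C P"
proof -
  note D = po_data[OF po]
  have "\<exists>!w. w \<in> hom C P P \<and> w \<cdot> f0 = f0 \<and> w \<cdot> g0 = g0" using po_univ[OF po D(1) D(2) D(3) D(4)] .
  moreover have "idt C P \<in> hom C P P \<and> idt C P \<cdot> f0 = f0 \<and> idt C P \<cdot> g0 = g0"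
    using id_hom[OF D(1)] id_l D(2) D(3) by blast
  ultimately show ?thesis using w by blast
qed

lemma po_Ac: assumes po: "is_pushout C f g P f0 g0" and PA: "P \<in> Ac" and po': "is_pushout C f g P' f' g'"
  shows "P' \<in> Ac"
proof -
  note D = po_data[OF po] and D' = po_data[OF po']
  obtain w where w: "w \<in> hom C P P'" "w \<cdot> f0 = f'" "w \<cdot> g0 = g'"
    using po_univ[OF po D'(1) D'(2) D'(3) D'(4)] by blast
  obtain w' where w': "w' \<in> hom C P' P" "w' \<cdot> f' = f0" "w' \<cdot> g' = g0"
    using po_univ[OF po' D(1) D(2) D(3) D(4)] by blast
  have a: "w' \<cdot> w = idt C P"
  proof (rule po_self[OF po])
    show "w' \<cdot> w \<in> hom C P P" using w w' by blast
    show "(w' \<cdot> w) \<cdot> f0 = f0" using assoc[OF D(2) w(1) w'(1)] w w' by simp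
    show "(w' \<cdot> w) \<cdot> g0 = g0" using assoc[OF D(3) w(1) w'(1)] w w' by simp
  qed
  have b: "w \<cdot> w' = idt C P'"
  proof (rule po_self[OF po'])
    show "w \<cdot> w' \<in> hom C P' P'" using w w' by blast
    show "(w \<cdot> w') \<cdot> f' = f'" using assoc[OF D'(2) w'(1) w(1)] w w' by simp
    show "(w \<cdot> w') \<cdot> g' = g'" using assoc[OF D'(3) w'(1) w(1)] w w' by simp
  qed
  show ?thesis using Ac_iso[OF PA w(1) w'(1) a b] .
qed

end

theorem mainTheorem8:
  fixes C :: "('o, 'm, 'x) cat_scheme" and E :: "('m \<times> 'm) set" and A :: "'o set"
  assumes "deflation_exact C E"
    and "adm_defl_percolating C E A"
    and "admissible C E f" and "kernel_in C A f" and "cokernel_in C A f"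
    and "g \<in> ar C" and "dm C g = dm C f" and "cd C g \<in> A"
  shows "(\<exists>P f' g'. is_pushout C f g P f' g') \<and>
         (\<forall>P f' g'. is_pushout C f g P f' g' \<longrightarrow>
            admissible C E f' \<and> kernel_in C A f' \<and> cokernel_in C A f')"
proof -
  interpret dex C E A using assms(1,2) by (unfold_locales)
  obtain P0 f0 g0 where P0: "is_pushout C f g P0 f0 g0" "P0 \<in> A"
    using main_exists[OF assms(3-8)] by blast
  have "\<forall>P f' g'. is_pushout C f g P f' g' \<longrightarrow>
            admissible C E f' \<and> kernel_in C A f' \<and> cokernel_in C A f'"
  proof (intro allI impI)
    fix P f' g' assume po: "is_pushout C f g P f' g'"
    have "P \<in> A" using po_Ac[OF P0 po] .
    moreover have "f' \<in> hom C (cd C g) P" using po_data[OF po] by blast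
    ultimately show "admissible C E f' \<and> kernel_in C A f' \<and> cokernel_in C A f'"
      using final assms(8) by blast
  qed
  then show ?thesis using P0 by blast
qed


end
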